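(* $F_{\{3,8\},\{0\}}$ is nonempty (the bisectors $\mathcal{B}_3$ and $\mathcal{B}_8$ meet in $H^2_\mathbb{C}$), but $\overline{F}_{\{3,8\},\{0,2,6\}}=\emptyset$. In particular $F_{\{3,8\}}=\emptyset$.
   Context: Hermitian form on $\mathbb{C}^3$: $\langle V,W\rangle=V_1\overline{W_3}+V_2\overline{W_2}+V_3\overline{W_1}$. Let $$G_1=\begin{pmatrix}1&1&-\frac{1+i\sqrt7}{2}\\0&1&-1\\0&0&1\end{pmatrix},\quad G_3=\begin{pmatrix}1&0&0\\-1&1&0\\ \frac{-1+i\sqrt7}{2}&1&1\end{pmatrix},\quad G_2=G_3G_1^{-1}G_3^{-1}G_1,$$ $Q=(1,0,0)^T$. Set $\gamma_1=G_2,\gamma_2=G_2^{-1},\gamma_3=G_3,\gamma_4=G_3^{-1}$ and, for $k\ge1$ and $1\le j\le4$, $\gamma_{8k-4+j}=G_1^k\gamma_jG_1^{-k}$, $\gamma_{8k+j}=G_1^{-k}\gamma_jG_1^{k}$. For $Z\in\mathbb{C}^3\setminus\{0\}$ let $f_0(Z)=\langle Z,Z\rangle$ and $f_j(Z)=|\langle Z,Q\rangle|^2-|\langle Z,\gamma_jQ\rangle|^2$ for $j\ge1$ (signs defined on $\mathbb{C}P^2$); $\mathcal{B}_j=\{f_j=0,f_0<0\}$. Let $I=\{0,1,2,\dots\}$. For disjoint $J,K\subset I$, $F_{J,K}=\{[Z]\in\mathbb{C}P^2: f_j(Z)=0\ \forall j\in J,\ f_i(Z)<0\ \forall i\in K\}$,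 $\overline{F}_{J,K}$ is defined likewise with $f_i\le0$ for $i\in K$, and $F_J=F_{J,I\setminus J}$. *)

theory Defs
  imports "HOL-Analysis.Analysis"
begin

type_synonym cvec = "complex ^ 3"
type_synonym cmat = "complex ^ 3 ^ 3"

definition herm :: "cvec \<Rightarrow> cvec \<Rightarrow> complex" where
  "herm V W = V$1 * cnj (W$3) + V$2 * cnj (W$2) + V$3 * cnj (W$1)"

definition G1 :: cmat where
  "G1 = vector [vector [1, 1, - (1 + \<i> * complex_of_real (sqrt 7)) / 2],
                vector [0, 1, -1],
                vector [0, 0, 1]]"

definition G3 :: cmat where
  "G3 = vector [vector [1, 0, 0],
                vector [-1, 1, 0],
                vector [(-1 + \<i> * complex_of_real (sqrt 7)) / 2, 1, 1]]"

definition G2 :: cmat where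
  "G2 = G3 ** matrix_inv G1 ** matrix_inv G3 ** G1"

definition Qpt :: cvec where
  "Qpt = vector [1, 0, 0]"

definition mpow :: "cmat \<Rightarrow> nat \<Rightarrow> cmat" where
  "mpow A k = ((\<lambda>B. A ** B) ^^ k) (mat 1)"

definition gamma_base :: "nat \<Rightarrow> cmat" where
  "gamma_base i = (if i = 1 then G2 else if i = 2 then matrix_inv G2
                   else if i = 3 then G3 else matrix_inv G3)"

text \<open>gamma_j for j >= 1: writing j - 1 = 4 m + (r - 1) with 1 <= r <= 4,
  m = 0 gives gamma_r; m = 2k-1 (odd) gives j = 8k-4+r and gamma_j = G1^k gamma_r G1^-k;
  m = 2k (even, positive) gives j = 8k+r and gamma_j = G1^-k gamma_r G1^k.\<close>
definition gamma :: "nat \<Rightarrow> cmat" where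
  "gamma j = (let m = (j - 1) div 4; r = (j - 1) mod 4 + 1 in
     if m = 0 then gamma_base r
     else if odd m then
       (let P = mpow G1 ((m + 1) div 2) in P ** gamma_base r ** matrix_inv P)
     else
       (let P = matrix_inv (mpow G1 (m div 2)) in P ** gamma_base r ** matrix_inv P))"

definition f :: "nat \<Rightarrow> cvec \<Rightarrow> real" where
  "f j Z = (if j = 0 then Re (herm Z Z)
            else (cmod (herm Z Qpt))\<^sup>2 - (cmod (herm Z (gamma j *v Qpt)))\<^sup>2)"

text \<open>Subsets of CP^2 are represented by their cones of nonzero representatives
  in C^3; all conditions are invariant under nonzero complex scaling.\<close>
definition F_JK :: "nat set \<Rightarrow> nat set \<Rightarrow> cvec set" where
  "F_JK J K = {Z. Z \<noteq> 0 \<and> (\<forall>j\<in>J. f j Z = 0) \<and> (\<forall>i\<in>K. f i Z < 0)}"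

definition Fbar_JK :: "nat set \<Rightarrow> nat set \<Rightarrow> cvec set" where
  "Fbar_JK J K = {Z. Z \<noteq> 0 \<and> (\<forall>j\<in>J. f j Z = 0) \<and> (\<forall>i\<in>K. f i Z \<le> 0)}"

definition F_J :: "nat set \<Rightarrow> cvec set" where
  "F_J J = F_JK J (UNIV - J)"

end

theory Submission imports Defs begin

definition "cs = complex_of_real (sqrt 7)"
lemma cs7: "cs * cs = 7"
proof -
  have "complex_of_real (sqrt 7 * sqrt 7) = 7" by simp
  then show ?thesis unfolding cs_def by (simp only: of_real_mult)
qed
lemma cnj_cs[simp]: "cnj cs = cs" unfolding cs_def by simp

lemma vec3_eq: "((vector [a,b,c])::'a::zero^3) = vector [d,e,g] \<longleftrightarrow> a = d \<and> b = e \<and> c = g"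
  by (auto simp: vec_eq_iff forall_3)

lemma mat1_3: "(mat 1 :: cmat) = vector [vector [1,0,0], vector[0,1,0], vector[0,0,1]]"
  by (simp add: vec_eq_iff forall_3 mat_def)

lemma mm3: "(vector [vector [a11,a12,a13], vector [a21,a22,a23], vector [a31,a32,a33]] :: cmat) **
   (vector [vector [b11,b12,b13], vector [b21,b22,b23], vector [b31,b32,b33]] :: cmat) =
   vector [vector [a11*b11+a12*b21+a13*b31, a11*b12+a12*b22+a13*b32, a11*b13+a12*b23+a13*b33],
           vector [a21*b11+a22*b21+a23*b31, a21*b12+a22*b22+a23*b32, a21*b13+a22*b23+a23*b33],
           vector [a31*b11+a32*b21+a33*b31, a31*b12+a32*b22+a33*b32, a31*b13+a32*b23+a33*b33]]"
  by (simp add: vec_eq_iff matrix_matrix_mult_def sum_3 forall_3)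

lemma mv3: "(vector [vector [a11,a12,a13], vector [a21,a22,a23], vector [a31,a32,a33]] :: cmat) *v
   (vector [b1,b2,b3] :: cvec) = vector [a11*b1+a12*b2+a13*b3, a21*b1+a22*b2+a23*b3, a31*b1+a32*b2+a33*b3]"
  by (simp add: vec_eq_iff matrix_vector_mult_def sum_3 forall_3)

definition G1i :: cmat where
  "G1i = vector [vector [1, -1, (-1 + \<i> * cs) / 2],
                vector [0, 1, 1],
                vector [0, 0, 1]]"
definition G3i :: cmat where
  "G3i = vector [vector [1, 0, 0],
                vector [1, 1, 0],
                vector [(-1 - \<i> * cs) / 2, -1, 1]]"

lemma G1': "G1 = vector [vector [1, 1, - (1 + \<i> * cs) / 2],
                vector [0, 1, -1],
                vector [0, 0, 1]]" unfolding G1_def cs_def ..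
lemma G3': "G3 = vector [vector [1, 0, 0],
                vector [-1, 1, 0],
                vector [(-1 + \<i> * cs) / 2, 1, 1]]" unfolding G3_def cs_def ..

lemma G1_G1i: "G1 ** G1i = mat 1" unfolding G1' G1i_def mat1_3 mm3 vec3_eq
  by (simp add: field_simps)
lemma G1i_G1: "G1i ** G1 = mat 1" unfolding G1' G1i_def mat1_3 mm3 vec3_eq
  by (simp add: field_simps)
lemma G3_G3i: "G3 ** G3i = mat 1" unfolding G3' G3i_def mat1_3 mm3 vec3_eq
  by (simp add: field_simps)
lemma G3i_G3: "G3i ** G3 = mat 1" unfolding G3' G3i_def mat1_3 mm3 vec3_eq
  by (simp add: field_simps)

lemma cs2: "cs^2 = 7" using cs7 by (simp add: power2_eq_square)
lemma cs7': "cs * (cs * x) = 7 * x" by (simp add: cs7 mult.assoc[symmetric])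

lemma minv: fixes A B :: cmat assumes "A ** B = mat 1" "B ** A = mat 1"
  shows "matrix_inv A = B"
proof -
  have ex: "\<exists>C. A ** C = mat 1 \<and> C ** A = mat 1" using assms by blast
  define C where "C = matrix_inv A"
  have C: "A ** C = mat 1 \<and> C ** A = mat 1" unfolding C_def matrix_inv_def
    using someI_ex[OF ex] by blast
  have "C = C ** (A ** B)" using assms by simp
  also have "\<dots> = (C ** A) ** B" by (simp add: matrix_mul_assoc)
  also have "\<dots> = B" using C by simp
  finally show ?thesis unfolding C_def .
qed

lemma invG1: "matrix_inv G1 = G1i" by (rule minv[OF G1_G1i G1i_G1])
lemma invG3: "matrix_inv G3 = G3i" by (rule minv[OF G3_G3i G3i_G3])

lemma canc: "G1 ** (G1i ** X) = X" "G1i ** (G1 ** X) = X" "G3 ** (G3i ** X) = X" "G3i ** (G3 ** X) = X"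
  by (simp_all add: matrix_mul_assoc G1_G1i G1i_G1 G3_G3i G3i_G3)

definition "G2i = G1i ** G3 ** G1 ** G3i"
lemma invG2: "matrix_inv G2 = G2i"
  apply (rule minv)
  unfolding G2_def G2i_def invG1 invG3
  by (simp_all add: matrix_mul_assoc[symmetric] canc G1_G1i G1i_G1 G3_G3i G3i_G3)

lemma mpow1: "mpow G1 (Suc 0) = G1" by (simp add: mpow_def)

lemma gamma2: "gamma 2 = G2i" by (simp add: gamma_def gamma_base_def invG2)
lemma gamma3: "gamma 3 = G3" by (simp add: gamma_def gamma_base_def)
lemma gamma6: "gamma 6 = G1 ** G2i ** G1i" by (simp add: gamma_def gamma_base_def invG2 mpow1 invG1 Let_def)
lemma gamma8: "gamma 8 = G1 ** G3i ** G1i" by (simp add: gamma_def gamma_base_def invG3 mpow1 invG1 Let_def)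

lemma Q': "Qpt = vector [1,0,0]" by (simp add: Qpt_def)

lemmas vsimps = matrix_vector_mul_assoc[symmetric] G1' G1i_def G3' G3i_def Q' mv3 vec3_eq

lemma g2Q: "gamma 2 *v Qpt = vector [0,0,-1]"
  unfolding gamma2 G2i_def vsimps by (simp add: field_simps cs7 cs2 cs7')
lemma g3Q: "gamma 3 *v Qpt = vector [1,-1,(-1 + \<i> * cs) / 2]"
  unfolding gamma3 vsimps by (simp add: field_simps cs7 cs2 cs7')
lemma g6Q: "gamma 6 *v Qpt = vector [(1 + \<i> * cs) / 2,1,-1]"
  unfolding gamma6 G2i_def vsimps by (simp add: field_simps cs7 cs2 cs7')
lemma g8Q: "gamma 8 *v Qpt = vector [(1 + \<i> * cs) / 2,(3 + \<i> * cs) / 2,-(1 + \<i> * cs) / 2]"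
  unfolding gamma8 vsimps by (simp add: field_simps cs7 cs2 cs7')

lemma herm3: "herm Z (vector [v1,v2,v3]) = Z$1 * cnj v3 + Z$2 * cnj v2 + Z$3 * cnj v1"
  by (simp add: herm_def)

lemma key_gen: fixes s :: real assumes s: "s * s = 7" shows
 "2 * Re (herm Z Z) + ((cmod (Z$3))^2 - (cmod (herm Z (vector [0,0,-1])))^2)
   + ((cmod (Z$3))^2 - (cmod (herm Z (vector [(1 + \<i> * of_real s) / 2,1,-1])))^2)
   - ((cmod (Z$3))^2 - (cmod (herm Z (vector [1,-1,(-1 + \<i> * of_real s) / 2])))^2)
   - ((cmod (Z$3))^2 - (cmod (herm Z (vector [(1 + \<i> * of_real s) / 2,(3 + \<i> * of_real s) / 2,-(1 + \<i> * of_real s) / 2])))^2)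
  = 2 * (cmod (Z$1 + ((-1 - \<i> * of_real s) / 2) * Z$2))^2 + 2 * (cmod (Z$2 + Z$3 / 2))^2 + (cmod (Z$3))^2 / 2"
proof -
  have s2: "s * (s * x) = 7 * x" for x using s by (simp add: mult.assoc[symmetric])
  show ?thesis
    unfolding herm3 cmod_power2
    apply (simp add: herm_def)
    apply (simp add: field_simps power2_eq_square)
    apply (simp add: s2 s algebra_simps)
    done
qed

lemma s7: "sqrt 7 * sqrt 7 = (7::real)" by simp

lemma hq: "herm Z Qpt = Z$3" by (simp add: Q' herm3)

lemma key: "2 * f 0 Z + f 2 Z + f 6 Z - f 3 Z - f 8 Z =
   2 * (cmod (Z$1 + ((-1 - \<i> * cs) / 2) * Z$2))^2 + 2 * (cmod (Z$2 + Z$3 / 2))^2 + (cmod (Z$3))^2 / 2"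
proof -
  have e: "f 0 Z = Re (herm Z Z)" "f 2 Z = (cmod (Z$3))^2 - (cmod (herm Z (vector [0,0,-1])))^2"
    "f 3 Z = (cmod (Z$3))^2 - (cmod (herm Z (vector [1,-1,(-1 + \<i> * cs) / 2])))^2"
    "f 6 Z = (cmod (Z$3))^2 - (cmod (herm Z (vector [(1 + \<i> * cs) / 2,1,-1])))^2"
    "f 8 Z = (cmod (Z$3))^2 - (cmod (herm Z (vector [(1 + \<i> * cs) / 2,(3 + \<i> * cs) / 2,-(1 + \<i> * cs) / 2])))^2"
    by (simp_all add: f_def g2Q g3Q g6Q g8Q hq)
  show ?thesis unfolding e cs_def by (rule key_gen[OF s7])
qed

lemma pos: fixes Z :: cvec assumes "Z \<noteq> 0"
  shows "2 * f 0 Z + f 2 Z + f 6 Z - f 3 Z - f 8 Z > 0"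
proof (rule ccontr)
  assume "\<not> ?thesis"
  then have le: "2 * (cmod (Z$1 + ((-1 - \<i> * cs) / 2) * Z$2))^2 + 2 * (cmod (Z$2 + Z$3 / 2))^2 + (cmod (Z$3))^2 / 2 \<le> 0"
    unfolding key by simp
  have a: "(cmod (Z$1 + ((-1 - \<i> * cs) / 2) * Z$2))^2 \<ge> 0" "(cmod (Z$2 + Z$3 / 2))^2 \<ge> 0"
    "(cmod (Z$3))^2 \<ge> 0" by simp_all
  have "(cmod (Z$3))^2 = 0" using le a by linarith
  then have z3: "Z$3 = 0" by simp
  have "(cmod (Z$2 + Z$3 / 2))^2 = 0" using le a by linarith
  then have z2: "Z$2 = 0" using z3 by simp
  have "(cmod (Z$1 + ((-1 - \<i> * cs) / 2) * Z$2))^2 = 0" using le a by linarith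
  then have z1: "Z$1 = 0" using z2 by simp
  have "Z = 0" using z1 z2 z3 by (simp add: vec_eq_iff forall_3)
  then show False using assms by simp
qed

lemma wit_gen: fixes s :: real assumes s: "s * s = 7" shows
  "herm (vector [-3 + \<i> * (6 - 5 * of_real s), (-16 + 3 * of_real s) + \<i> * (4 * of_real s - 3), 30])
      (vector [1,-1,(-1 + \<i> * of_real s) / 2]) = 30"
  "herm (vector [-3 + \<i> * (6 - 5 * of_real s), (-16 + 3 * of_real s) + \<i> * (4 * of_real s - 3), 30])
      (vector [(1 + \<i> * of_real s) / 2,(3 + \<i> * of_real s) / 2,-(1 + \<i> * of_real s) / 2]) = 24 - 18 * \<i>"
  "Re (herm (vector [-3 + \<i> * (6 - 5 * of_real s), (-16 + 3 * of_real s) + \<i> * (4 * of_real s - 3), 30 :: complex])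
      (vector [-3 + \<i> * (6 - 5 * of_real s), (-16 + 3 * of_real s) + \<i> * (4 * of_real s - 3), 30])) = 260 - 120 * s"
proof -
  have s2: "s * (s * x) = 7 * x" for x using s by (simp add: mult.assoc[symmetric])
  show "herm (vector [-3 + \<i> * (6 - 5 * of_real s), (-16 + 3 * of_real s) + \<i> * (4 * of_real s - 3), 30])
      (vector [1,-1,(-1 + \<i> * of_real s) / 2]) = 30"
    unfolding herm3 by (simp add: complex_eq_iff field_simps power2_eq_square s2 s algebra_simps)
  show "herm (vector [-3 + \<i> * (6 - 5 * of_real s), (-16 + 3 * of_real s) + \<i> * (4 * of_real s - 3), 30])
      (vector [(1 + \<i> * of_real s) / 2,(3 + \<i> * of_real s) / 2,-(1 + \<i> * of_real s) / 2]) = 24 - 18 * \<i>"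
    unfolding herm3 by (simp add: complex_eq_iff field_simps power2_eq_square s2 s algebra_simps)
  show "Re (herm (vector [-3 + \<i> * (6 - 5 * of_real s), (-16 + 3 * of_real s) + \<i> * (4 * of_real s - 3), 30 :: complex])
      (vector [-3 + \<i> * (6 - 5 * of_real s), (-16 + 3 * of_real s) + \<i> * (4 * of_real s - 3), 30])) = 260 - 120 * s"
    unfolding herm_def by (simp add: field_simps power2_eq_square s2 s algebra_simps)
qed


definition "Z0 = (vector [-3 + \<i> * (6 - 5 * cs), (-16 + 3 * cs) + \<i> * (4 * cs - 3), 30] :: cvec)"

lemma Z0_in: "Z0 \<in> F_JK {3, 8} {0}"
proof -
  note wg = wit_gen[OF s7, folded cs_def, folded Z0_def]
  have z3: "Z0 $ 3 = 30" by (simp add: Z0_def)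
  have "Z0 \<noteq> 0" using z3 by auto
  moreover have "f 3 Z0 = 0"
    unfolding f_def using wg(1) z3 by (simp add: g3Q hq)
  moreover have "f 8 Z0 = 0"
    unfolding f_def using wg(2) z3 by (simp add: g8Q hq cmod_power2)
  moreover have "f 0 Z0 < 0"
  proof -
    have "13/6 < sqrt (7::real)" by (rule real_less_rsqrt) (simp add: power2_eq_square)
    then show ?thesis unfolding f_def using wg(3) by simp
  qed
  ultimately show ?thesis unfolding F_JK_def by auto
qed

theorem proposition5p8:
  shows "F_JK {3, 8} {0} \<noteq> {} \<and> Fbar_JK {3, 8} {0, 2, 6} = {} \<and> F_J {3, 8} = {}"
proof -
  have A: "F_JK {3, 8} {0} \<noteq> {}" using Z0_in by blast
  have B: "Fbar_JK {3, 8} {0, 2, 6} = {}"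
  proof (rule ccontr)
    assume "Fbar_JK {3, 8} {0, 2, 6} \<noteq> {}"
    then obtain Z where Z: "Z \<noteq> 0" "f 3 Z = 0" "f 8 Z = 0" "f 0 Z \<le> 0" "f 2 Z \<le> 0" "f 6 Z \<le> 0"
      unfolding Fbar_JK_def by auto
    have "2 * f 0 Z + f 2 Z + f 6 Z - f 3 Z - f 8 Z > 0" using pos[OF Z(1)] .
    then show False using Z by linarith
  qed
  have C: "F_J {3, 8} \<subseteq> Fbar_JK {3, 8} {0, 2, 6}"
    unfolding F_J_def F_JK_def Fbar_JK_def by (auto simp: less_imp_le)
  show ?thesis using A B C by blast
qed

end
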